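(* Let $X$ be a Banach space and $T\in \mathrm{Lip}_0(X)$. Then $$\sup \operatorname{Re} W(T)=\lim_{t\to 0^+}\frac{\|I+tT\|_L-1}{t},$$ and consequently $$\omega(T)=\max_{\alpha\in \mathbb{T}}\lim_{t\to 0^+}\frac{\|I+t\alpha T\|_L-1}{t}.$$
   Context: $X$ is a Banach space over $\mathbb{K}=\mathbb{R}$ or $\mathbb{C}$; $\mathbb{T}=\{\alpha\in\mathbb{K}:|\alpha|=1\}$; $I$ is the identity map of $X$. $\mathrm{Lip}_0(X)$ is the set of Lipschitz maps $T:X\to X$ with $T(0)=0$, normed by $\|T\|_L=\sup\{\|Tx-Ty\|/\|x-y\|: x,y\in X, x\neq y\}$. For $x\in X$, $D(x)=\{x^*\in X^*: x^*(x)=\|x^*\|\|x\|=\|x\|^2\}$. The Lipschitz numerical range of $T\in\mathrm{Lip}_0(X)$ is $W(T)=\{ f(Tx-Ty)/\|x-y\|^2 : x,y\in X,\ x\neq y,\ f\in D(x-y)\}$ and its numerical radius is $\omega(T)=\sup\{|\lambda|:\lambda\in W(T)\}$. *)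

theory Defs
  imports "HOL-Analysis.Analysis"
begin

definition Lip0 :: "('a::real_normed_vector \<Rightarrow> 'a) \<Rightarrow> bool" where
  "Lip0 T \<longleftrightarrow> T 0 = 0 \<and> (\<exists>C. C-lipschitz_on UNIV T)"

definition Lip_norm :: "('a::real_normed_vector \<Rightarrow> 'a) \<Rightarrow> real" where
  "Lip_norm T = Sup {norm (T x - T y) / norm (x - y) | x y. x \<noteq> y}"

definition DR :: "'a::real_normed_vector \<Rightarrow> ('a \<Rightarrow> real) set" where
  "DR x = {f. bounded_linear f \<and> f x = onorm f * norm x \<and> onorm f * norm x = (norm x)^2}"

definition WR :: "('a::real_normed_vector \<Rightarrow> 'a) \<Rightarrow> real set" where
  "WR T = {f (T x - T y) / (norm (x - y))^2 | x y f. x \<noteq> y \<and> f \<in> DR (x - y)}"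

definition omegaR :: "('a::real_normed_vector \<Rightarrow> 'a) \<Rightarrow> real" where
  "omegaR T = Sup ((\<lambda>r. \<bar>r\<bar>) ` WR T)"

text \<open>A complex Banach space is modelled as a real Banach space together with a
  complex structure J (multiplication by i); complex scalar multiplication is
  cscale J z x = Re z x + Im z J x, and the norm is required to be complex-homogeneous.\<close>

definition cscale :: "('a::real_normed_vector \<Rightarrow> 'a) \<Rightarrow> complex \<Rightarrow> 'a \<Rightarrow> 'a" where
  "cscale J z x = Re z *\<^sub>R x + Im z *\<^sub>R J x"

definition complex_structure :: "('a::real_normed_vector \<Rightarrow> 'a) \<Rightarrow> bool" where
  "complex_structure J \<longleftrightarrow> linear J \<and> (\<forall>x. J (J x) = - x) \<and>
     (\<forall>z x. norm (cscale J z x) = cmod z * norm x)"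

definition cdual :: "('a::real_normed_vector \<Rightarrow> 'a) \<Rightarrow> ('a \<Rightarrow> complex) \<Rightarrow> bool" where
  "cdual J f \<longleftrightarrow> bounded_linear f \<and> (\<forall>x. f (J x) = \<i> * f x)"

definition DC :: "('a::real_normed_vector \<Rightarrow> 'a) \<Rightarrow> 'a \<Rightarrow> ('a \<Rightarrow> complex) set" where
  "DC J x = {f. cdual J f \<and> f x = complex_of_real (onorm f * norm x) \<and>
                onorm f * norm x = (norm x)^2}"

definition WC :: "('a::real_normed_vector \<Rightarrow> 'a) \<Rightarrow> ('a \<Rightarrow> 'a) \<Rightarrow> complex set" where
  "WC J T = {f (T x - T y) / complex_of_real ((norm (x - y))^2) | x y f.
               x \<noteq> y \<and> f \<in> DC J (x - y)}"

definition omegaC :: "('a::real_normed_vector \<Rightarrow> 'a) \<Rightarrow> ('a \<Rightarrow> 'a) \<Rightarrow> real" where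
  "omegaC J T = Sup (cmod ` WC J T)"

end

theory Submission
  imports Defs
begin


definition Wset :: "('a::real_normed_vector \<Rightarrow> ('a \<Rightarrow> real) set) \<Rightarrow> ('a \<Rightarrow> 'a) \<Rightarrow> real set" where
  "Wset D T = {f (T x - T y) / (norm (x - y))^2 | x y f. x \<noteq> y \<and> f \<in> D (x - y)}"

lemma lipnorm_le:
  fixes F :: "'a::real_normed_vector \<Rightarrow> 'a"
  assumes "C-lipschitz_on UNIV F"
  shows "norm (F x - F y) \<le> Lip_norm F * norm (x - y)"
proof (cases "x = y")
  case True then show ?thesis by simp
next
  case False
  have bd: "bdd_above {norm (F x - F y) / norm (x - y) | x y. x \<noteq> y}"
  proof (rule bdd_aboveI)
    fix r assume "r \<in> {norm (F x - F y) / norm (x - y) | x y. x \<noteq> y}"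
    then obtain a b where r: "r = norm (F a - F b) / norm (a - b)" "a \<noteq> b" by blast
    have "norm (F a - F b) \<le> C * norm (a - b)" using assms by (simp add: lipschitz_on_def dist_norm)
    then show "r \<le> C" using r by (simp add: divide_le_eq)
  qed
  have "norm (F x - F y) / norm (x - y) \<le> Lip_norm F"
    unfolding Lip_norm_def using False by (intro cSup_upper[OF _ bd]) blast
  then show ?thesis using False by (simp add: divide_le_eq mult.commute)
qed

lemma lipnorm_least:
  fixes F :: "'a::real_normed_vector \<Rightarrow> 'a"
  assumes "\<exists>x::'a. x \<noteq> 0" and "\<And>x y. x \<noteq> y \<Longrightarrow> norm (F x - F y) \<le> B * norm (x - y)"
  shows "Lip_norm F \<le> B"
  unfolding Lip_norm_def
proof (rule cSup_least)
  obtain x :: 'a where "x \<noteq> 0" using assms(1) by blast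
  then show "{norm (F x - F y) / norm (x - y) | x y. x \<noteq> y} \<noteq> {}" by blast
next
  fix r assume "r \<in> {norm (F x - F y) / norm (x - y) | x y. x \<noteq> y}"
  then obtain a b where r: "r = norm (F a - F b) / norm (a - b)" "a \<noteq> b" by blast
  then show "r \<le> B" using assms(2)[of a b] by (simp add: divide_le_eq)
qed

lemma main:
  fixes T :: "'a::real_normed_vector \<Rightarrow> 'a" and D :: "'a \<Rightarrow> ('a \<Rightarrow> real) set"
  assumes L: "L-lipschitz_on UNIV T"
  and nz: "\<exists>x::'a. x \<noteq> 0"
  and D1: "\<And>w f. w \<noteq> 0 \<Longrightarrow> f \<in> D w \<Longrightarrow> linear f \<and> f w = (norm w)^2 \<and> (\<forall>z. f z \<le> norm w * norm z)"
  and D2: "\<And>w. w \<noteq> 0 \<Longrightarrow> D w \<noteq> {}"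
  shows "((\<lambda>t. (Lip_norm (\<lambda>x. x + t *\<^sub>R T x) - 1) / t) \<longlongrightarrow> Sup (Wset D T)) (at_right 0)"
proof -
  have L0: "0 \<le> L" using L by (simp add: lipschitz_on_def)
  have TL: "\<And>x y. norm (T x - T y) \<le> L * norm (x - y)" using L by (simp add: lipschitz_on_def dist_norm)
  define W where "W = Wset D T"
  have Wb: "r \<le> L \<and> -L \<le> r" if rW: "r \<in> W" for r
  proof -
    obtain x y f where r: "r = f (T x - T y) / (norm (x - y))^2" "x \<noteq> y" "f \<in> D (x - y)"
      using rW unfolding W_def Wset_def by blast
    have u: "x - y \<noteq> 0" using r by simp
    note fD = D1[OF u r(3)]
    have lin: "linear f" using fD by blast
    have "f (T x - T y) \<le> norm (x - y) * norm (T x - T y)" using fD by blast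
    also have "\<dots> \<le> norm (x - y) * (L * norm (x - y))" by (intro mult_left_mono TL) auto
    finally have a: "f (T x - T y) \<le> L * (norm (x - y))^2" by (simp add: power2_eq_square algebra_simps)
    have "f (-(T x - T y)) \<le> norm (x - y) * norm (-(T x - T y))" using fD by blast
    also have "\<dots> \<le> norm (x - y) * (L * norm (x - y))" using TL[of x y] by (intro mult_left_mono) (auto simp: norm_minus_commute)
    finally have b: "- f (T x - T y) \<le> L * (norm (x - y))^2"
      using linear_neg[OF lin, of "T x - T y"] by (simp add: power2_eq_square mult.left_commute)
    have pos: "0 < (norm (x - y))^2" using u by simp
    show ?thesis using a b pos unfolding r(1) by (simp add: divide_le_eq le_divide_eq)
  qed
  have Wne: "W \<noteq> {}"
  proof -
    obtain x :: 'a where x: "x \<noteq> 0" using nz by blast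
    then obtain f where "f \<in> D (x - 0)" using D2 by fastforce
    then show ?thesis using x unfolding W_def Wset_def by blast
  qed
  have bdd: "bdd_above W" by (rule bdd_aboveI[of _ L]) (use Wb in blast)
  define \<omega> where "\<omega> = Sup W"
  have \<omega>ge: "\<And>r. r \<in> W \<Longrightarrow> r \<le> \<omega>" unfolding \<omega>_def using bdd by (simp add: cSup_upper)
  have \<omega>L: "\<omega> \<le> L" unfolding \<omega>_def using Wne Wb by (intro cSup_least) auto
  have key1: "\<omega> \<le> (Lip_norm (\<lambda>x. x + h *\<^sub>R T x) - 1) / h" if h: "0 < h" for h
  proof -
    define M where "M = Lip_norm (\<lambda>x. x + h *\<^sub>R T x)"
    have lipF: "(1 + h * L)-lipschitz_on UNIV (\<lambda>x. x + h *\<^sub>R T x)"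
    proof (rule lipschitz_onI)
      fix x y :: 'a
      have "dist (x + h *\<^sub>R T x) (y + h *\<^sub>R T y) = norm ((x - y) + h *\<^sub>R (T x - T y))"
        by (simp add: dist_norm algebra_simps)
      also have "\<dots> \<le> norm (x - y) + h * norm (T x - T y)" using h by (simp add: norm_triangle_le)
      also have "\<dots> \<le> norm (x - y) + h * (L * norm (x - y))" using h TL[of x y] by simp
      finally show "dist (x + h *\<^sub>R T x) (y + h *\<^sub>R T y) \<le> (1 + h * L) * dist x y"
        by (simp add: dist_norm algebra_simps)
      show "0 \<le> 1 + h * L" using h L0 by simp
    qed
    have "r \<le> (M - 1) / h" if rW: "r \<in> W" for r
    proof -
      obtain x y f where r: "r = f (T x - T y) / (norm (x - y))^2" "x \<noteq> y" "f \<in> D (x - y)"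
        using rW unfolding W_def Wset_def by blast
      have u: "x - y \<noteq> 0" using r by simp
      note fD = D1[OF u r(3)]
      have lin: "linear f" using fD by blast
      have "f ((x - y) + h *\<^sub>R (T x - T y)) \<le> norm (x - y) * norm ((x - y) + h *\<^sub>R (T x - T y))"
        using fD by blast
      also have "norm ((x - y) + h *\<^sub>R (T x - T y)) = norm ((x + h *\<^sub>R T x) - (y + h *\<^sub>R T y))"
        by (simp add: algebra_simps)
      also have "\<dots> \<le> M * norm (x - y)" unfolding M_def by (rule lipnorm_le[OF lipF])
      finally have "(norm (x - y))^2 + h * f (T x - T y) \<le> norm (x - y) * (M * norm (x - y))"
        using fD by (simp add: linear_add[OF lin] linear_scale[OF lin] mult_left_mono)
      then have "h * f (T x - T y) \<le> (M - 1) * (norm (x - y))^2"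
        by (simp add: power2_eq_square algebra_simps)
      moreover have pos: "0 < (norm (x - y))^2" using u by simp
      ultimately show ?thesis unfolding r(1) using h
        by (simp add: divide_le_eq le_divide_eq mult.commute)
    qed
    then show ?thesis unfolding \<omega>_def M_def[symmetric] using Wne by (intro cSup_least) auto
  qed
  have key2: "(Lip_norm (\<lambda>x. x + h *\<^sub>R T x) - 1) / h \<le> (h * L^2 + \<omega>) / (1 - h * \<omega>)"
    if h: "0 < h" "h * (L + 1) < 1" for h
  proof -
    have hw: "h * \<omega> < 1"
    proof -
      have "h * \<omega> \<le> h * L" using \<omega>L h by simp
      also have "\<dots> < 1" using h L0 by (simp add: algebra_simps)
      finally show ?thesis .
    qed
    have ineq: "norm ((x + h *\<^sub>R T x) - (y + h *\<^sub>R T y)) * (1 - h * \<omega>) \<le> norm (x - y) * (1 + h^2 * L^2)"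
      if xy: "x \<noteq> y" for x y
    proof -
      define u where "u = x - y"
      define v where "v = T x - T y"
      define w where "w = u + h *\<^sub>R v"
      have wE: "(x + h *\<^sub>R T x) - (y + h *\<^sub>R T y) = w" unfolding w_def u_def v_def by (simp add: algebra_simps)
      show ?thesis
      proof (cases "w = 0")
        case True then show ?thesis using wE by simp
      next
        case False
        obtain f where f: "f \<in> D w" using D2[OF False] by blast
        note fD = D1[OF False f]
        have lin: "linear f" using fD by blast
        define x' where "x' = x + h *\<^sub>R v"
        have x'y: "x' - y = w" unfolding x'_def w_def u_def by (simp add: algebra_simps)
        have "x' \<noteq> y" using x'y False by auto
        then have "f (T x' - T y) / (norm (x' - y))^2 \<in> W" unfolding W_def Wset_def using f x'y by blast
        then have "f (T x' - T y) / (norm w)^2 \<le> \<omega>" using \<omega>ge x'y by simp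
        then have A: "f (T x' - T y) \<le> \<omega> * (norm w)^2" using False by (simp add: divide_le_eq)
        have vE: "v = (T x' - T y) + (T x - T x')" unfolding v_def by simp
        have B: "f (T x - T x') \<le> norm w * (h * L^2 * norm u)"
        proof -
          have "f (T x - T x') \<le> norm w * norm (T x - T x')" using fD by blast
          also have "norm (T x - T x') \<le> L * norm (x - x')" by (rule TL)
          also have "norm (x - x') = h * norm v" unfolding x'_def using h by simp
          also have "norm v \<le> L * norm u" unfolding v_def u_def by (rule TL)
          finally show ?thesis using h L0
            by (simp add: mult_left_mono mult_right_mono power2_eq_square algebra_simps)
        qed
        have C: "f u \<le> norm w * norm u" using fD by blast
        have "(norm w)^2 = f w" using fD by simp
        also have "\<dots> = f u + h * (f (T x' - T y) + f (T x - T x'))"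
        proof -
          have "f v = f (T x' - T y) + f (T x - T x')"
            using linear_add[OF lin, of "T x' - T y" "T x - T x'"] vE by simp
          then show ?thesis unfolding w_def by (simp add: linear_add[OF lin] linear_scale[OF lin])
        qed
        also have "\<dots> \<le> norm w * norm u + h * (\<omega> * (norm w)^2 + norm w * (h * L^2 * norm u))"
          using A B C h by (intro add_mono mult_left_mono) auto
        finally have D: "norm w * norm w \<le> norm w * (norm u + h * \<omega> * norm w + h^2 * L^2 * norm u)"
          by (simp add: power2_eq_square algebra_simps)
        have "norm w \<le> norm u + h * \<omega> * norm w + h^2 * L^2 * norm u"
          using D False by simp
        then show ?thesis unfolding wE u_def[symmetric] by (simp add: algebra_simps)
      qed
    qed
    have "Lip_norm (\<lambda>x. x + h *\<^sub>R T x) \<le> (1 + h^2 * L^2) / (1 - h * \<omega>)"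
    proof (rule lipnorm_least[OF nz])
      fix x y :: 'a assume "x \<noteq> y"
      from ineq[OF this] hw show "norm ((x + h *\<^sub>R T x) - (y + h *\<^sub>R T y)) \<le> (1 + h^2 * L^2) / (1 - h * \<omega>) * norm (x - y)"
        by (simp add: le_divide_eq mult.commute)
    qed
    then have "Lip_norm (\<lambda>x. x + h *\<^sub>R T x) - 1 \<le> h * ((h * L^2 + \<omega>) / (1 - h * \<omega>))"
      using hw h by (simp add: field_simps power2_eq_square)
    then show ?thesis using h by (simp add: divide_le_eq mult.commute)
  qed
  have lim: "((\<lambda>h. (h * L^2 + \<omega>) / (1 - h * \<omega>)) \<longlongrightarrow> (0 * L^2 + \<omega>) / (1 - 0 * \<omega>)) (at_right 0)"
    by (intro tendsto_intros) auto
  have ev: "eventually (\<lambda>h. 0 < h \<and> h * (L + 1) < 1) (at_right (0::real))"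
    unfolding eventually_at_right_field
    using L0 by (intro exI[of _ "1 / (L + 1)"]) (auto simp: field_simps)
  show ?thesis unfolding W_def[symmetric] \<omega>_def[symmetric]
  proof (rule tendsto_sandwich[OF _ _ tendsto_const])
    show "eventually (\<lambda>h. \<omega> \<le> (Lip_norm (\<lambda>x. x + h *\<^sub>R T x) - 1) / h) (at_right 0)"
      using ev by eventually_elim (use key1 in auto)
    show "eventually (\<lambda>h. (Lip_norm (\<lambda>x. x + h *\<^sub>R T x) - 1) / h \<le> (h * L^2 + \<omega>) / (1 - h * \<omega>)) (at_right 0)"
      using ev by eventually_elim (use key2 in auto)
    show "((\<lambda>h. (h * L^2 + \<omega>) / (1 - h * \<omega>)) \<longlongrightarrow> \<omega>) (at_right 0)" using lim by simp
  qed
qed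



definition pfun :: "('a::real_normed_vector \<times> real) set \<Rightarrow> bool" where
  "pfun G \<longleftrightarrow> (0,0) \<in> G \<and> (\<forall>x a b. (x,a) \<in> G \<longrightarrow> (x,b) \<in> G \<longrightarrow> a = b) \<and>
     (\<forall>x a y b. (x,a) \<in> G \<longrightarrow> (y,b) \<in> G \<longrightarrow> (x+y, a+b) \<in> G) \<and>
     (\<forall>x a c. (x,a) \<in> G \<longrightarrow> (c *\<^sub>R x, c*a) \<in> G) \<and> (\<forall>x a. (x,a) \<in> G \<longrightarrow> a \<le> norm x)"

lemma pfunD:
  assumes "pfun G"
  shows pfun0: "(0,0) \<in> G"
    and pfunF: "(x,a) \<in> G \<Longrightarrow> (x,b) \<in> G \<Longrightarrow> a = b"
    and pfunA: "(x,a) \<in> G \<Longrightarrow> (z,b) \<in> G \<Longrightarrow> (x+z, a+b) \<in> G"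
    and pfunS: "(x,a) \<in> G \<Longrightarrow> (c *\<^sub>R x, c*a) \<in> G"
    and pfunN: "(x,a) \<in> G \<Longrightarrow> a \<le> norm x"
  using assms unfolding pfun_def by blast+

lemma pfun_ext:
  fixes M :: "('a::real_normed_vector \<times> real) set"
  assumes M: "pfun M" and y: "\<forall>a. (y,a) \<notin> M"
  shows "\<exists>M'. pfun M' \<and> M \<subseteq> M' \<and> M' \<noteq> M"
proof -
  have M0: "(0,0) \<in> M" and Mf: "\<And>x a b. (x,a) \<in> M \<Longrightarrow> (x,b) \<in> M \<Longrightarrow> a = b"
    and Ma: "\<And>x a z b. (x,a) \<in> M \<Longrightarrow> (z,b) \<in> M \<Longrightarrow> (x+z, a+b) \<in> M"
    and Ms: "\<And>x a c. (x,a) \<in> M \<Longrightarrow> (c *\<^sub>R x, c*a) \<in> M"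
    and Mn: "\<And>x a. (x,a) \<in> M \<Longrightarrow> a \<le> norm x"
    using M unfolding pfun_def by blast+
  define Lo where "Lo = {a - norm (x - y) | x a. (x,a) \<in> M}"
  have loup: "a - norm (x - y) \<le> norm (z + y) - b" if "(x,a) \<in> M" "(z,b) \<in> M" for x a z b
  proof -
    have "a + b \<le> norm (x + z)" using Mn[OF Ma[OF that]] .
    also have "x + z = (x - y) + (z + y)" by simp
    also have "norm \<dots> \<le> norm (x - y) + norm (z + y)" by (rule norm_triangle_ineq)
    finally show ?thesis by simp
  qed
  define c where "c = Sup Lo"
  have Lone: "Lo \<noteq> {}" using M0 unfolding Lo_def by blast
  have Lobdd: "bdd_above Lo" unfolding Lo_def
    using loup[OF _ M0] by (intro bdd_aboveI[of _ "norm (0 + y) - 0"]) auto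
  have clo: "a - norm (x - y) \<le> c" if "(x,a) \<in> M" for x a
    unfolding c_def using that Lobdd by (intro cSup_upper) (auto simp: Lo_def)
  have cup: "c \<le> norm (z + y) - b" if "(z,b) \<in> M" for z b
    unfolding c_def using Lone loup[OF _ that] by (intro cSup_least) (auto simp: Lo_def)
  define M' where "M' = {(x + t *\<^sub>R y, a + t * c) | x a t. (x,a) \<in> M}"
  have sub: "M \<subseteq> M'"
  proof
    fix p assume "p \<in> M"
    obtain a b where p: "p = (a,b)" by (cases p)
    have "(a + 0 *\<^sub>R y, b + 0 * c) \<in> M'" unfolding M'_def using \<open>p \<in> M\<close> p by blast
    then show "p \<in> M'" using p by simp
  qed
  have "(0 + 1 *\<^sub>R y, 0 + 1 * c) \<in> M'" unfolding M'_def using M0 by blast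
  then have yc: "(y, c) \<in> M'" by simp
  have neq: "M' \<noteq> M" using yc y by blast
  have diffM: "(x1 - x2, a1 - a2) \<in> M" if "(x1,a1) \<in> M" "(x2,a2) \<in> M" for x1 a1 x2 a2
    using Ma[OF that(1) Ms[OF that(2), of "-1"]] by simp
  have "pfun M'"
    unfolding pfun_def
  proof (intro conjI allI impI)
    show "(0,0) \<in> M'" using sub M0 by blast
  next
    fix x a b assume A: "(x,a) \<in> M'" "(x,b) \<in> M'"
    then obtain x1 a1 t1 x2 a2 t2 where e: "x = x1 + t1 *\<^sub>R y" "a = a1 + t1 * c" "(x1,a1) \<in> M"
      "x = x2 + t2 *\<^sub>R y" "b = a2 + t2 * c" "(x2,a2) \<in> M" unfolding M'_def by blast
    show "a = b"
    proof (cases "t1 = t2")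
      case True
      then have "x1 = x2" using e by simp
      then show ?thesis using e True Mf by blast
    next
      case False
      have "(x1 - x2, a1 - a2) \<in> M" using diffM e by blast
      from Ms[OF this, of "1 / (t2 - t1)"]
      have "((1 / (t2 - t1)) *\<^sub>R (x1 - x2), (1 / (t2 - t1)) * (a1 - a2)) \<in> M" .
      moreover have "x1 - x2 = (t2 - t1) *\<^sub>R y" using e by (simp add: algebra_simps)
      ultimately have "(y, (1 / (t2 - t1)) * (a1 - a2)) \<in> M" using False by simp
      then show ?thesis using y by blast
    qed
  next
    fix x a z b assume A: "(x,a) \<in> M'" "(z,b) \<in> M'"
    then obtain x1 a1 t1 x2 a2 t2 where e: "x = x1 + t1 *\<^sub>R y" "a = a1 + t1 * c" "(x1,a1) \<in> M"
      "z = x2 + t2 *\<^sub>R y" "b = a2 + t2 * c" "(x2,a2) \<in> M" unfolding M'_def by blast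
    have "x + z = (x1 + x2) + (t1 + t2) *\<^sub>R y" "a + b = (a1 + a2) + (t1 + t2) * c"
      using e by (simp_all add: algebra_simps)
    then show "(x + z, a + b) \<in> M'" unfolding M'_def using Ma[OF e(3) e(6)] by blast
  next
    fix x a s assume A: "(x,a) \<in> M'"
    then obtain x1 a1 t1 where e: "x = x1 + t1 *\<^sub>R y" "a = a1 + t1 * c" "(x1,a1) \<in> M"
      unfolding M'_def by blast
    have "s *\<^sub>R x = s *\<^sub>R x1 + (s * t1) *\<^sub>R y" "s * a = s * a1 + (s * t1) * c"
      using e by (simp_all add: algebra_simps)
    then show "(s *\<^sub>R x, s * a) \<in> M'" unfolding M'_def using Ms[OF e(3)] by blast
  next
    fix x a assume A: "(x,a) \<in> M'"
    then obtain x1 a1 t where e: "x = x1 + t *\<^sub>R y" "a = a1 + t * c" "(x1,a1) \<in> M"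
      unfolding M'_def by blast
    show "a \<le> norm x"
    proof (cases t "0::real" rule: linorder_cases)
      case equal then show ?thesis using e Mn by simp
    next
      case greater
      have m: "((1/t) *\<^sub>R x1, (1/t) * a1) \<in> M" by (rule Ms[OF e(3)])
      have "c \<le> norm ((1/t) *\<^sub>R x1 + y) - (1/t) * a1" by (rule cup[OF m])
      then have h1: "c + (1/t) * a1 \<le> norm ((1/t) *\<^sub>R x1 + y)" by simp
      have "t * (c + (1/t) * a1) \<le> t * norm ((1/t) *\<^sub>R x1 + y)"
        using mult_left_mono[OF h1, of t] greater by simp
      then have "t * c + a1 \<le> t * norm ((1/t) *\<^sub>R x1 + y)" using greater by (simp add: distrib_left)
      then have "t * c \<le> t * norm ((1/t) *\<^sub>R x1 + y) - a1" by simp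
      also have "t * norm ((1/t) *\<^sub>R x1 + y) = norm (t *\<^sub>R ((1/t) *\<^sub>R x1 + y))" using greater by simp
      also have "t *\<^sub>R ((1/t) *\<^sub>R x1 + y) = x" using greater e by (simp add: algebra_simps)
      finally show ?thesis using e by simp
    next
      case less
      define s where "s = - t"
      have s: "0 < s" using less s_def by simp
      have m: "((1/s) *\<^sub>R x1, (1/s) * a1) \<in> M" by (rule Ms[OF e(3)])
      have "(1/s) * a1 - norm ((1/s) *\<^sub>R x1 - y) \<le> c" by (rule clo[OF m])
      then have h1: "(1/s) * a1 \<le> c + norm ((1/s) *\<^sub>R x1 - y)" by simp
      have "s * ((1/s) * a1) \<le> s * (c + norm ((1/s) *\<^sub>R x1 - y))"
        using mult_left_mono[OF h1, of s] s by simp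
      then have "a1 \<le> s * c + s * norm ((1/s) *\<^sub>R x1 - y)" using s by (simp add: distrib_left)
      then have "a1 - s * norm ((1/s) *\<^sub>R x1 - y) \<le> s * c" by simp
      also have "s * norm ((1/s) *\<^sub>R x1 - y) = norm (s *\<^sub>R ((1/s) *\<^sub>R x1 - y))" using s by simp
      also have "s *\<^sub>R ((1/s) *\<^sub>R x1 - y) = x" using s e s_def by (simp add: algebra_simps)
      finally show ?thesis using e s_def by simp
    qed
  qed
  then show ?thesis using sub neq by blast
qed

lemma HB_real:
  fixes w :: "'a::real_normed_vector"
  assumes w: "w \<noteq> 0"
  shows "\<exists>f. linear f \<and> f w = norm w \<and> (\<forall>z. \<bar>f z\<bar> \<le> norm z)"
proof -
  define G0 where "G0 = {(c *\<^sub>R w, c * norm w) | c. True}"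
  define A where "A = {G. pfun G \<and> G0 \<subseteq> G}"
  have G0A: "G0 \<in> A" unfolding A_def pfun_def
  proof (intro CollectI conjI allI impI subset_refl)
    show "(0,0) \<in> G0" unfolding G0_def by (auto intro!: exI[of _ 0])
  next
    fix x a b assume "(x,a) \<in> G0" "(x,b) \<in> G0"
    then obtain c d where "x = c *\<^sub>R w" "a = c * norm w" "x = d *\<^sub>R w" "b = d * norm w"
      unfolding G0_def by blast
    then show "a = b" using w by (simp add: scaleR_cancel_right)
  next
    fix x a z b assume "(x,a) \<in> G0" "(z,b) \<in> G0"
    then obtain c d where "x = c *\<^sub>R w" "a = c * norm w" "z = d *\<^sub>R w" "b = d * norm w"
      unfolding G0_def by blast
    then show "(x + z, a + b) \<in> G0" unfolding G0_def
      by (auto intro!: exI[of _ "c + d"] simp: algebra_simps)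
  next
    fix x a s assume "(x,a) \<in> G0"
    then obtain c where "x = c *\<^sub>R w" "a = c * norm w" unfolding G0_def by blast
    then show "(s *\<^sub>R x, s * a) \<in> G0" unfolding G0_def by (auto intro!: exI[of _ "s * c"])
  next
    fix x a assume "(x,a) \<in> G0"
    then obtain c where "x = c *\<^sub>R w" "a = c * norm w" unfolding G0_def by blast
    then show "a \<le> norm x" by (simp add: mult_right_mono)
  qed
  have "\<exists>M\<in>A. \<forall>X\<in>A. M \<subseteq> X \<longrightarrow> X = M"
  proof (rule Zorn_Lemma2, intro ballI)
    fix C assume C: "C \<in> chains A"
    show "\<exists>U\<in>A. \<forall>X\<in>C. X \<subseteq> U"
    proof (cases "C = {}")
      case True then show ?thesis using G0A by blast
    next
      case False
      have CA: "C \<subseteq> A" and ch: "\<And>X Y. X \<in> C \<Longrightarrow> Y \<in> C \<Longrightarrow> X \<subseteq> Y \<or> Y \<subseteq> X"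
        using C unfolding chains_def chain_subset_def by blast+
      have P: "\<And>X. X \<in> C \<Longrightarrow> pfun X" and G: "\<And>X. X \<in> C \<Longrightarrow> G0 \<subseteq> X" using CA A_def by blast+
      obtain X0 where X0: "X0 \<in> C" using False by blast
      have "pfun (\<Union>C)" unfolding pfun_def
      proof (intro conjI allI impI)
        show "(0,0) \<in> \<Union>C" using pfun0[OF P[OF X0]] X0 by blast
      next
        fix x a b assume "(x,a) \<in> \<Union>C" "(x,b) \<in> \<Union>C"
        then obtain X Y where "X \<in> C" "Y \<in> C" "(x,a) \<in> X" "(x,b) \<in> Y" by blast
        then show "a = b" using ch[of X Y] pfunF[OF P[of X]] pfunF[OF P[of Y]] by blast
      next
        fix x a z b assume "(x,a) \<in> \<Union>C" "(z,b) \<in> \<Union>C"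
        then obtain X Y where XY: "X \<in> C" "Y \<in> C" "(x,a) \<in> X" "(z,b) \<in> Y" by blast
        show "(x + z, a + b) \<in> \<Union>C"
        proof (cases "X \<subseteq> Y")
          case True
          then have "(x + z, a + b) \<in> Y" using XY pfunA[OF P[of Y]] by blast
          then show ?thesis using XY by blast
        next
          case False
          then have "Y \<subseteq> X" using ch XY by blast
          then have "(x + z, a + b) \<in> X" using XY pfunA[OF P[of X]] by blast
          then show ?thesis using XY by blast
        qed
      next
        fix x a s assume "(x,a) \<in> \<Union>C"
        then obtain X where "X \<in> C" "(x,a) \<in> X" by blast
        then show "(s *\<^sub>R x, s * a) \<in> \<Union>C" using pfunS[OF P] by blast
      next
        fix x a assume "(x,a) \<in> \<Union>C"
        then obtain X where "X \<in> C" "(x,a) \<in> X" by blast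
        then show "a \<le> norm x" using pfunN[OF P] by blast
      qed
      moreover have "G0 \<subseteq> \<Union>C" using G[OF X0] X0 by blast
      ultimately show ?thesis unfolding A_def by blast
    qed
  qed
  then obtain M where MA: "M \<in> A" and max: "\<And>X. X \<in> A \<Longrightarrow> M \<subseteq> X \<Longrightarrow> X = M" by blast
  have PM: "pfun M" and G0M: "G0 \<subseteq> M" using MA A_def by blast+
  have dom: "\<exists>a. (y,a) \<in> M" for y
  proof (rule ccontr)
    assume "\<nexists>a. (y,a) \<in> M"
    then obtain M' where "pfun M'" "M \<subseteq> M'" "M' \<noteq> M" using pfun_ext[OF PM] by blast
    then show False using max[of M'] G0M unfolding A_def by blast
  qed
  define f where "f x = (THE a. (x,a) \<in> M)" for x
  have Mf: "\<And>x a b. (x,a) \<in> M \<Longrightarrow> (x,b) \<in> M \<Longrightarrow> a = b" using pfunF[OF PM] by blast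
  have fM: "(x, f x) \<in> M" for x
  proof -
    obtain a where a: "(x,a) \<in> M" using dom by blast
    have "\<exists>!a. (x,a) \<in> M" using a Mf by blast
    then show ?thesis unfolding f_def by (rule theI')
  qed
  have fE: "(x,a) \<in> M \<Longrightarrow> f x = a" for x a using fM Mf by blast
  have lin: "linear f"
  proof (rule linearI)
    fix x y
    have "(x + y, f x + f y) \<in> M" using pfunA[OF PM fM fM] .
    then show "f (x + y) = f x + f y" by (rule fE)
  next
    fix c x
    have "(c *\<^sub>R x, c * f x) \<in> M" using pfunS[OF PM fM] .
    then show "f (c *\<^sub>R x) = c *\<^sub>R f x" using fE by simp
  qed
  have "(1 *\<^sub>R w, 1 * norm w) \<in> M" using G0M unfolding G0_def by blast
  then have fw: "f w = norm w" using fE by simp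
  have fn: "f z \<le> norm z" for z using pfunN[OF PM fM] .
  have "\<bar>f z\<bar> \<le> norm z" for z using fn[of z] fn[of "-z"] linear_neg[OF lin, of z] by simp
  then show ?thesis using lin fw by blast
qed



lemma DR_props:
  fixes w :: "'a::real_normed_vector"
  assumes w: "w \<noteq> 0" and f: "f \<in> DR w"
  shows "linear f \<and> f w = (norm w)^2 \<and> (\<forall>z. f z \<le> norm w * norm z)"
proof -
  have bl: "bounded_linear f" and e1: "f w = onorm f * norm w" and e2: "onorm f * norm w = (norm w)^2"
    using f unfolding DR_def by blast+
  have on: "onorm f = norm w" using e2 w by (simp add: power2_eq_square)
  have "f z \<le> norm w * norm z" for z
  proof -
    have "f z \<le> norm (f z)" by simp
    also have "\<dots> \<le> onorm f * norm z" by (rule onorm[OF bl])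
    finally show ?thesis using on by simp
  qed
  then show ?thesis using bl e1 e2 bounded_linear.linear by metis
qed

lemma HB_scaled:
  fixes w :: "'a::real_normed_vector"
  assumes w: "w \<noteq> 0"
  shows "\<exists>\<phi>. bounded_linear \<phi> \<and> \<phi> w = (norm w)^2 \<and> (\<forall>z. \<bar>\<phi> z\<bar> \<le> norm w * norm z)"
proof -
  obtain g where g: "linear g" "g w = norm w" "\<And>z. \<bar>g z\<bar> \<le> norm z" using HB_real[OF w] by blast
  define \<phi> where "\<phi> z = norm w * g z" for z
  have b: "\<bar>\<phi> z\<bar> \<le> norm w * norm z" for z
    unfolding \<phi>_def abs_mult using g(3)[of z] by (simp add: mult_left_mono)
  have "bounded_linear \<phi>"
  proof (rule bounded_linear_intro[where K = "norm w"])
    fix x y show "\<phi> (x + y) = \<phi> x + \<phi> y" unfolding \<phi>_def using linear_add[OF g(1)] by (simp add: algebra_simps)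
  next
    fix r x show "\<phi> (r *\<^sub>R x) = r *\<^sub>R \<phi> x" unfolding \<phi>_def using linear_scale[OF g(1)] by simp
  next
    fix x show "norm (\<phi> x) \<le> norm x * norm w" using b[of x] by (simp add: mult.commute)
  qed
  moreover have "\<phi> w = (norm w)^2" unfolding \<phi>_def g(2) by (simp add: power2_eq_square)
  ultimately show ?thesis using b by blast
qed

lemma DR_ne:
  fixes w :: "'a::real_normed_vector"
  assumes w: "w \<noteq> 0"
  shows "DR w \<noteq> {}"
proof -
  obtain \<phi> where p: "bounded_linear \<phi>" "\<phi> w = (norm w)^2" "\<And>z. \<bar>\<phi> z\<bar> \<le> norm w * norm z"
    using HB_scaled[OF w] by blast
  have le: "onorm \<phi> \<le> norm w" using p(3) by (intro onorm_bound) auto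
  have "norm (\<phi> w) \<le> onorm \<phi> * norm w" by (rule onorm[OF p(1)])
  then have "norm w * norm w \<le> onorm \<phi> * norm w" using p(2) by (simp add: power2_eq_square)
  then have "norm w \<le> onorm \<phi>" using w by simp
  then have on: "onorm \<phi> = norm w" using le by simp
  have "\<phi> \<in> DR w" unfolding DR_def using p on by (simp add: power2_eq_square)
  then show ?thesis by blast
qed

lemma Wset_bd:
  fixes T :: "'a::real_normed_vector \<Rightarrow> 'a"
  assumes L: "L-lipschitz_on UNIV T"
  and D1: "\<And>w f. w \<noteq> 0 \<Longrightarrow> f \<in> D w \<Longrightarrow> linear f \<and> f w = (norm w)^2 \<and> (\<forall>z. f z \<le> norm w * norm z)"
  and r: "r \<in> Wset D T"
  shows "\<bar>r\<bar> \<le> L"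
proof -
  have TL: "\<And>x y. norm (T x - T y) \<le> L * norm (x - y)" using L by (simp add: lipschitz_on_def dist_norm)
  obtain x y f where r: "r = f (T x - T y) / (norm (x - y))^2" "x \<noteq> y" "f \<in> D (x - y)"
    using r unfolding Wset_def by blast
  have u: "x - y \<noteq> 0" using r by simp
  note fD = D1[OF u r(3)]
  have lin: "linear f" using fD by blast
  have "f (T x - T y) \<le> norm (x - y) * norm (T x - T y)" using fD by blast
  also have "\<dots> \<le> norm (x - y) * (L * norm (x - y))" by (intro mult_left_mono TL) auto
  finally have a: "f (T x - T y) \<le> L * (norm (x - y))^2" by (simp add: power2_eq_square algebra_simps)
  have "f (-(T x - T y)) \<le> norm (x - y) * norm (-(T x - T y))" using fD by blast
  also have "\<dots> \<le> norm (x - y) * (L * norm (x - y))" using TL[of x y] by (intro mult_left_mono) (auto simp: norm_minus_commute)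
  finally have b: "- f (T x - T y) \<le> L * (norm (x - y))^2"
    using linear_neg[OF lin, of "T x - T y"] by (simp add: power2_eq_square mult.left_commute)
  have pos: "0 < (norm (x - y))^2" using u by simp
  show ?thesis using a b pos unfolding r(1) by (simp add: divide_le_eq le_divide_eq abs_le_iff)
qed

lemma Wset_ne:
  fixes T :: "'a::real_normed_vector \<Rightarrow> 'a"
  assumes nz: "\<exists>x::'a. x \<noteq> 0" and D2: "\<And>w. w \<noteq> 0 \<Longrightarrow> D w \<noteq> {}"
  shows "Wset D T \<noteq> {}"
proof -
  obtain x :: 'a where x: "x \<noteq> 0" using nz by blast
  then obtain f where "f \<in> D (x - 0)" using D2 by fastforce
  then show ?thesis using x unfolding Wset_def by blast
qed

lemma real_part:
  fixes T :: "'a::real_normed_vector \<Rightarrow> 'a"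
  assumes Lip: "Lip0 T" and nz: "\<exists>x::'a. x \<noteq> 0"
  shows "((\<lambda>t. (Lip_norm (\<lambda>x. x + t *\<^sub>R T x) - 1) / t) \<longlongrightarrow> Sup (WR T)) (at_right 0) \<and>
      (\<exists>g. (\<forall>\<alpha>::real. \<bar>\<alpha>\<bar> = 1 \<longrightarrow>
              ((\<lambda>t. (Lip_norm (\<lambda>x. x + t *\<^sub>R (\<alpha> *\<^sub>R T x)) - 1) / t) \<longlongrightarrow> g \<alpha>) (at_right 0)) \<and>
           (\<exists>\<alpha>. \<bar>\<alpha>\<bar> = 1 \<and> g \<alpha> = omegaR T) \<and>
           (\<forall>\<alpha>. \<bar>\<alpha>\<bar> = 1 \<longrightarrow> g \<alpha> \<le> omegaR T))"
proof -
  obtain L where L: "L-lipschitz_on UNIV T" using Lip unfolding Lip0_def by blast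
  have WRe: "WR S = Wset DR S" for S :: "'a \<Rightarrow> 'a" unfolding WR_def Wset_def by simp
  have lim: "((\<lambda>t. (Lip_norm (\<lambda>x. x + t *\<^sub>R S x) - 1) / t) \<longlongrightarrow> Sup (WR S)) (at_right 0)"
    if "C-lipschitz_on UNIV S" for S :: "'a \<Rightarrow> 'a" and C
    unfolding WRe by (rule main[OF that nz DR_props DR_ne])
  define W where "W = WR T"
  have Wne: "W \<noteq> {}" unfolding W_def WRe by (rule Wset_ne[OF nz DR_ne])
  have Wbd: "\<bar>r\<bar> \<le> L" if "r \<in> W" for r
    using Wset_bd[OF L DR_props] that unfolding W_def WRe by blast
  have scal: "WR (\<lambda>x. \<alpha> *\<^sub>R T x) = (\<lambda>r. \<alpha> * r) ` W" for \<alpha>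
  proof -
    have fl: "f (\<alpha> *\<^sub>R T x - \<alpha> *\<^sub>R T y) = \<alpha> * f (T x - T y)" if "f \<in> DR (x - y)" for f x y
    proof -
      have lin: "linear f" using that unfolding DR_def using bounded_linear.linear by blast
      show ?thesis using linear_diff[OF lin, of "\<alpha> *\<^sub>R T x" "\<alpha> *\<^sub>R T y"] linear_scale[OF lin, of \<alpha>]
        linear_diff[OF lin, of "T x" "T y"] by (simp add: right_diff_distrib)
    qed
    show ?thesis
    proof (rule set_eqI, rule iffI)
      fix s assume "s \<in> WR (\<lambda>x. \<alpha> *\<^sub>R T x)"
      then obtain x y f where e: "s = f (\<alpha> *\<^sub>R T x - \<alpha> *\<^sub>R T y) / (norm (x - y))^2" "x \<noteq> y" "f \<in> DR (x - y)"
        unfolding WR_def by blast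
      have "f (T x - T y) / (norm (x - y))^2 \<in> W" unfolding W_def WR_def using e by blast
      moreover have "s = \<alpha> * (f (T x - T y) / (norm (x - y))^2)" using e fl[OF e(3)] by simp
      ultimately show "s \<in> (\<lambda>r. \<alpha> * r) ` W" by blast
    next
      fix s assume "s \<in> (\<lambda>r. \<alpha> * r) ` W"
      then obtain x y f where e: "s = \<alpha> * (f (T x - T y) / (norm (x - y))^2)" "x \<noteq> y" "f \<in> DR (x - y)"
        unfolding W_def WR_def by blast
      have "s = f (\<alpha> *\<^sub>R T x - \<alpha> *\<^sub>R T y) / (norm (x - y))^2" using e fl[OF e(3)] by simp
      then show "s \<in> WR (\<lambda>x. \<alpha> *\<^sub>R T x)" unfolding WR_def using e by blast
    qed
  qed
  define g where "g \<alpha> = Sup ((\<lambda>r. \<alpha> * r) ` W)" for \<alpha> :: real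
  have lipa: "(\<bar>\<alpha>\<bar> * L)-lipschitz_on UNIV (\<lambda>x. \<alpha> *\<^sub>R T x)" for \<alpha>
  proof (rule lipschitz_onI)
    fix x y
    have e: "\<alpha> *\<^sub>R T x - \<alpha> *\<^sub>R T y = \<alpha> *\<^sub>R (T x - T y)" by (simp add: scaleR_diff_right)
    have "dist (\<alpha> *\<^sub>R T x) (\<alpha> *\<^sub>R T y) = \<bar>\<alpha>\<bar> * norm (T x - T y)"
      unfolding dist_norm e by simp
    also have "\<dots> \<le> \<bar>\<alpha>\<bar> * (L * dist x y)"
      using L unfolding lipschitz_on_def dist_norm by (intro mult_left_mono) auto
    finally show "dist (\<alpha> *\<^sub>R T x) (\<alpha> *\<^sub>R T y) \<le> \<bar>\<alpha>\<bar> * L * dist x y" by (simp add: mult.assoc)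
    show "0 \<le> \<bar>\<alpha>\<bar> * L" using L unfolding lipschitz_on_def by simp
  qed
  have gl: "((\<lambda>t. (Lip_norm (\<lambda>x. x + t *\<^sub>R (\<alpha> *\<^sub>R T x)) - 1) / t) \<longlongrightarrow> g \<alpha>) (at_right 0)" for \<alpha>
    using lim[OF lipa[of \<alpha>]] unfolding scal g_def .
  have abdd: "bdd_above (abs ` W)" using Wbd by (auto intro: bdd_aboveI[of _ L])
  have g_le: "g \<alpha> \<le> Sup (abs ` W)" if "\<bar>\<alpha>\<bar> = 1" for \<alpha>
    unfolding g_def
  proof (rule cSup_least)
    show "(\<lambda>r. \<alpha> * r) ` W \<noteq> {}" using Wne by blast
  next
    fix s assume "s \<in> (\<lambda>r. \<alpha> * r) ` W"
    then obtain r where r: "r \<in> W" "s = \<alpha> * r" by blast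
    have "s \<le> \<bar>\<alpha> * r\<bar>" using r by simp
    also have "\<dots> = \<bar>r\<bar>" using that by (simp add: abs_mult)
    also have "\<bar>r\<bar> \<le> Sup (abs ` W)" using r abdd by (intro cSup_upper) auto
    finally show "s \<le> Sup (abs ` W)" .
  qed
  have bddg: "bdd_above ((\<lambda>r. \<alpha> * r) ` W)" if "\<bar>\<alpha>\<bar> = 1" for \<alpha>
  proof (rule bdd_aboveI[of _ L])
    fix s assume "s \<in> (\<lambda>r. \<alpha> * r) ` W"
    then obtain r where r: "r \<in> W" "s = \<alpha> * r" by blast
    have "s \<le> \<bar>\<alpha> * r\<bar>" using r by simp
    then show "s \<le> L" using Wbd[OF r(1)] that by (simp add: abs_mult)
  qed
  have "Sup (abs ` W) \<le> max (g 1) (g (-1))"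
  proof (rule cSup_least)
    show "abs ` W \<noteq> {}" using Wne by blast
  next
    fix s assume "s \<in> abs ` W"
    then obtain r where r: "r \<in> W" "s = \<bar>r\<bar>" by blast
    have "r \<le> g 1" unfolding g_def using r bddg[of 1] by (intro cSup_upper) auto
    moreover have "-r \<le> g (-1)" unfolding g_def using r bddg[of "-1"] by (intro cSup_upper) auto
    ultimately show "s \<le> max (g 1) (g (-1))" using r by (auto simp: abs_if)
  qed
  then have ex: "\<exists>\<alpha>. \<bar>\<alpha>\<bar> = 1 \<and> g \<alpha> = Sup (abs ` W)"
  proof (cases "g 1 \<le> g (-1)")
    case True
    then have "g (-1) = Sup (abs ` W)" using g_le[of "-1"] \<open>Sup (abs ` W) \<le> max (g 1) (g (-1))\<close> by simp
    then show ?thesis by (intro exI[of _ "-1"]) simp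
  next
    case False
    then have "g 1 = Sup (abs ` W)" using g_le[of 1] \<open>Sup (abs ` W) \<le> max (g 1) (g (-1))\<close> by simp
    then show ?thesis by (intro exI[of _ 1]) simp
  qed
  have om: "omegaR T = Sup (abs ` W)" unfolding omegaR_def W_def ..
  have "\<exists>g. (\<forall>\<alpha>::real. \<bar>\<alpha>\<bar> = 1 \<longrightarrow>
              ((\<lambda>t. (Lip_norm (\<lambda>x. x + t *\<^sub>R (\<alpha> *\<^sub>R T x)) - 1) / t) \<longlongrightarrow> g \<alpha>) (at_right 0)) \<and>
           (\<exists>\<alpha>. \<bar>\<alpha>\<bar> = 1 \<and> g \<alpha> = omegaR T) \<and>
           (\<forall>\<alpha>. \<bar>\<alpha>\<bar> = 1 \<longrightarrow> g \<alpha> \<le> omegaR T)"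
    using gl ex g_le unfolding om by blast
  then show ?thesis using lim[OF L] by blast
qed



lemma cs_lin:
  assumes J: "complex_structure J"
  shows "cscale J \<alpha> (a + b) = cscale J \<alpha> a + cscale J \<alpha> b"
    and "cscale J \<alpha> (a - b) = cscale J \<alpha> a - cscale J \<alpha> b"
    and "cscale J \<alpha> (r *\<^sub>R a) = r *\<^sub>R cscale J \<alpha> a"
    and "norm (cscale J \<alpha> a) = cmod \<alpha> * norm a"
proof -
  have lin: "linear J" using J unfolding complex_structure_def by blast
  show "cscale J \<alpha> (a + b) = cscale J \<alpha> a + cscale J \<alpha> b"
    unfolding cscale_def linear_add[OF lin] by (simp add: algebra_simps)
  show "cscale J \<alpha> (a - b) = cscale J \<alpha> a - cscale J \<alpha> b"
    unfolding cscale_def linear_diff[OF lin] by (simp add: algebra_simps)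
  show "cscale J \<alpha> (r *\<^sub>R a) = r *\<^sub>R cscale J \<alpha> a"
    unfolding cscale_def linear_scale[OF lin] by (simp add: algebra_simps)
  show "norm (cscale J \<alpha> a) = cmod \<alpha> * norm a" using J unfolding complex_structure_def by blast
qed

lemma cdual_cs:
  assumes f: "cdual J f"
  shows "f (cscale J \<alpha> v) = \<alpha> * f v"
proof -
  have bl: "bounded_linear f" and fJ: "\<And>x. f (J x) = \<i> * f x" using f unfolding cdual_def by blast+
  have lin: "linear f" using bl bounded_linear.linear by blast
  have "f (cscale J \<alpha> v) = Re \<alpha> *\<^sub>R f v + Im \<alpha> *\<^sub>R f (J v)"
    unfolding cscale_def linear_add[OF lin] linear_scale[OF lin] ..
  also have "\<dots> = (of_real (Re \<alpha>) + \<i> * of_real (Im \<alpha>)) * f v"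
    unfolding fJ scaleR_conv_of_real by (simp add: algebra_simps)
  also have "of_real (Re \<alpha>) + \<i> * of_real (Im \<alpha>) = \<alpha>" by (simp add: complex_eq_iff)
  finally show ?thesis .
qed

lemma DC_onorm:
  assumes w: "w \<noteq> 0" and f: "f \<in> DC J w"
  shows "onorm f = norm w" "f w = of_real ((norm w)^2)" "bounded_linear f" "cdual J f"
proof -
  have e2: "onorm f * norm w = (norm w)^2" and e1: "f w = complex_of_real (onorm f * norm w)"
    and cd: "cdual J f" using f unfolding DC_def by blast+
  show "onorm f = norm w" using e2 w by (simp add: power2_eq_square)
  show "f w = of_real ((norm w)^2)" using e1 e2 by simp
  show "bounded_linear f" using cd unfolding cdual_def by blast
  show "cdual J f" by fact
qed

lemma DC_props:
  assumes w: "w \<noteq> 0" and f: "\<phi> \<in> {\<lambda>z. Re (f z) | f. f \<in> DC J w}"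
  shows "linear \<phi> \<and> \<phi> w = (norm w)^2 \<and> (\<forall>z. \<phi> z \<le> norm w * norm z)"
proof -
  obtain f where f: "\<phi> = (\<lambda>z. Re (f z))" "f \<in> DC J w" using f by blast
  note d = DC_onorm[OF w f(2)]
  have lin: "linear f" using d(3) bounded_linear.linear by blast
  have "linear \<phi>" unfolding f(1)
    by (rule linearI) (simp_all add: linear_add[OF lin] linear_scale[OF lin])
  moreover have "\<phi> w = (norm w)^2" unfolding f(1) d(2) by simp
  moreover have "\<phi> z \<le> norm w * norm z" for z
  proof -
    have "\<phi> z \<le> cmod (f z)" unfolding f(1) by (rule complex_Re_le_cmod)
    also have "\<dots> \<le> onorm f * norm z" using onorm[OF d(3)] by simp
    finally show ?thesis using d(1) by simp
  qed
  ultimately show ?thesis by blast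
qed

lemma DC_ne:
  fixes w :: "'a::real_normed_vector"
  assumes J: "complex_structure J" and w: "w \<noteq> 0"
  shows "DC J w \<noteq> {}"
proof -
  obtain \<phi> where p: "bounded_linear \<phi>" "\<phi> w = (norm w)^2" "\<And>z. \<bar>\<phi> z\<bar> \<le> norm w * norm z"
    using HB_scaled[OF w] by blast
  have linJ: "linear J" and JJ: "\<And>x. J (J x) = - x" using J unfolding complex_structure_def by blast+
  have linp: "linear \<phi>" using p(1) bounded_linear.linear by blast
  define F where "F z = Complex (\<phi> z) (- \<phi> (J z))" for z
  have Fadd: "F (x + y) = F x + F y" for x y
    unfolding F_def by (simp add: linear_add[OF linp] linear_add[OF linJ] complex_eq_iff)
  have Fscale: "F (r *\<^sub>R x) = r *\<^sub>R F x" for r x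
    unfolding F_def by (simp add: linear_scale[OF linp] linear_scale[OF linJ] complex_eq_iff)
  have linF: "linear F" by (rule linearI[OF Fadd Fscale])
  have FJ: "F (J x) = \<i> * F x" for x
    unfolding F_def JJ using linear_neg[OF linp] by (simp add: complex_eq_iff)
  have cdF: "\<And>\<alpha> v. F (cscale J \<alpha> v) = \<alpha> * F v"
  proof -
    fix \<alpha> v
    have "F (cscale J \<alpha> v) = Re \<alpha> *\<^sub>R F v + Im \<alpha> *\<^sub>R F (J v)"
      unfolding cscale_def linear_add[OF linF] linear_scale[OF linF] ..
    also have "\<dots> = (of_real (Re \<alpha>) + \<i> * of_real (Im \<alpha>)) * F v"
      unfolding FJ scaleR_conv_of_real by (simp add: algebra_simps)
    also have "of_real (Re \<alpha>) + \<i> * of_real (Im \<alpha>) = \<alpha>" by (simp add: complex_eq_iff)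
    finally show "F (cscale J \<alpha> v) = \<alpha> * F v" .
  qed
  have ReF: "Re (F z) = \<phi> z" for z unfolding F_def by simp
  have Fb: "cmod (F z) \<le> norm w * norm z" for z
  proof (cases "F z = 0")
    case True then show ?thesis by simp
  next
    case False
    define \<alpha> where "\<alpha> = cnj (F z) / of_real (cmod (F z))"
    have a1: "cmod \<alpha> = 1" unfolding \<alpha>_def using False by (simp add: norm_divide)
    have "\<alpha> * F z = of_real ((cmod (F z))^2) / of_real (cmod (F z))"
      unfolding \<alpha>_def complex_norm_square by (simp add: mult.commute)
    also have "\<dots> = of_real (cmod (F z))" using False by (simp add: power2_eq_square)
    finally have aF: "\<alpha> * F z = of_real (cmod (F z))" .
    have "cmod (F z) = Re (F (cscale J \<alpha> z))" unfolding cdF aF by simp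
    also have "\<dots> = \<phi> (cscale J \<alpha> z)" by (rule ReF)
    also have "\<dots> \<le> norm w * norm (cscale J \<alpha> z)" using p(3) by (simp add: abs_le_iff)
    also have "norm (cscale J \<alpha> z) = norm z" using cs_lin(4)[OF J] a1 by simp
    finally show ?thesis .
  qed
  have blF: "bounded_linear F"
    by (rule bounded_linear_intro[where K = "norm w", OF Fadd Fscale]) (use Fb in \<open>simp add: mult.commute\<close>)
  have le: "onorm F \<le> norm w" using Fb by (intro onorm_bound) auto
  have ReFw: "Re (F w) = (norm w)^2" using ReF p(2) by simp
  have cFw: "cmod (F w) \<le> (norm w)^2" using Fb[of w] by (simp add: power2_eq_square)
  have ImFw: "Im (F w) = 0"
  proof -
    have "(cmod (F w))^2 \<le> ((norm w)^2)^2" using cFw by (intro power_mono) auto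
    then have "(Re (F w))^2 + (Im (F w))^2 \<le> (Re (F w))^2" unfolding cmod_power2 ReFw .
    then show ?thesis by simp
  qed
  have Fw: "F w = of_real ((norm w)^2)" using ReFw ImFw by (simp add: complex_eq_iff)
  have "norm (F w) \<le> onorm F * norm w" by (rule onorm[OF blF])
  moreover have "norm (F w) = norm w * norm w" unfolding Fw by (simp add: power2_eq_square norm_mult)
  ultimately have "norm w * norm w \<le> onorm F * norm w" by simp
  then have "norm w \<le> onorm F" using w by simp
  then have on: "onorm F = norm w" using le by simp
  have "F \<in> DC J w" unfolding DC_def cdual_def using blF FJ Fw on by (simp add: power2_eq_square)
  then show ?thesis by blast
qed


lemma complex_part:
  fixes S :: "'b::real_normed_vector \<Rightarrow> 'b"
  assumes J: "complex_structure J" and Lip: "Lip0 S" and nz: "\<exists>x::'b. x \<noteq> 0"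
  shows "((\<lambda>t. (Lip_norm (\<lambda>x. x + t *\<^sub>R S x) - 1) / t) \<longlongrightarrow> Sup (Re ` WC J S)) (at_right 0) \<and>
      (\<exists>g. (\<forall>\<alpha>::complex. cmod \<alpha> = 1 \<longrightarrow>
              ((\<lambda>t. (Lip_norm (\<lambda>x. x + t *\<^sub>R cscale J \<alpha> (S x)) - 1) / t) \<longlongrightarrow> g \<alpha>) (at_right 0)) \<and>
           (\<exists>\<alpha>. cmod \<alpha> = 1 \<and> g \<alpha> = omegaC J S) \<and>
           (\<forall>\<alpha>. cmod \<alpha> = 1 \<longrightarrow> g \<alpha> \<le> omegaC J S))"
proof -
  obtain L where L: "L-lipschitz_on UNIV S" using Lip unfolding Lip0_def by blast
  have L0: "0 \<le> L" using L by (simp add: lipschitz_on_def)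
  have SL: "\<And>x y. norm (S x - S y) \<le> L * norm (x - y)" using L by (simp add: lipschitz_on_def dist_norm)
  define D where "D w = {\<lambda>z. Re (f z) | f. f \<in> DC J w}" for w
  have D1: "\<And>w f. w \<noteq> 0 \<Longrightarrow> f \<in> D w \<Longrightarrow> linear f \<and> f w = (norm w)^2 \<and> (\<forall>z. f z \<le> norm w * norm z)"
    unfolding D_def by (rule DC_props)
  have D2: "\<And>w. w \<noteq> 0 \<Longrightarrow> D w \<noteq> {}" unfolding D_def using DC_ne[OF J] by blast
  have WCe: "Re ` WC J R = Wset D R" for R :: "'b \<Rightarrow> 'b"
  proof (rule set_eqI, rule iffI)
    fix s assume "s \<in> Re ` WC J R"
    then obtain x y f where e: "s = Re (f (R x - R y) / complex_of_real ((norm (x - y))^2))" "x \<noteq> y" "f \<in> DC J (x - y)"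
      unfolding WC_def by blast
    have "(\<lambda>z. Re (f z)) \<in> D (x - y)" unfolding D_def using e by blast
    moreover have "s = Re (f (R x - R y)) / (norm (x - y))^2" using e(1) by simp
    ultimately show "s \<in> Wset D R" unfolding Wset_def using e(2)
      by (intro CollectI exI[of _ x] exI[of _ y] exI[of _ "\<lambda>z. Re (f z)"]) simp
  next
    fix s assume "s \<in> Wset D R"
    then obtain x y \<phi> where e: "s = \<phi> (R x - R y) / (norm (x - y))^2" "x \<noteq> y" "\<phi> \<in> D (x - y)"
      unfolding Wset_def by blast
    then obtain f where f: "\<phi> = (\<lambda>z. Re (f z))" "f \<in> DC J (x - y)" unfolding D_def by blast
    have "s = Re (f (R x - R y) / complex_of_real ((norm (x - y))^2))" using e(1) f(1) by simp
    moreover have "f (R x - R y) / complex_of_real ((norm (x - y))^2) \<in> WC J R"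
      unfolding WC_def using e(2) f(2) by blast
    ultimately show "s \<in> Re ` WC J R" by blast
  qed
  have lim: "((\<lambda>t. (Lip_norm (\<lambda>x. x + t *\<^sub>R R x) - 1) / t) \<longlongrightarrow> Sup (Re ` WC J R)) (at_right 0)"
    if "C-lipschitz_on UNIV R" for R :: "'b \<Rightarrow> 'b" and C
    unfolding WCe by (rule main[OF that nz D1 D2])
  define W where "W = WC J S"
  have Wne: "W \<noteq> {}"
  proof -
    obtain x :: 'b where x: "x \<noteq> 0" using nz by blast
    then obtain f where "f \<in> DC J (x - 0)" using DC_ne[OF J] by fastforce
    then show ?thesis using x unfolding W_def WC_def by blast
  qed
  have Wbd: "cmod z \<le> L" if zW: "z \<in> W" for z
  proof -
    obtain x y f where e: "z = f (S x - S y) / complex_of_real ((norm (x - y))^2)" "x \<noteq> y" "f \<in> DC J (x - y)"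
      using zW unfolding W_def WC_def by blast
    have u: "x - y \<noteq> 0" using e by simp
    note d = DC_onorm[OF u e(3)]
    have "cmod (f (S x - S y)) \<le> onorm f * norm (S x - S y)" by (rule onorm[OF d(3)])
    also have "\<dots> \<le> norm (x - y) * (L * norm (x - y))" unfolding d(1) by (intro mult_left_mono SL) auto
    finally have a: "cmod (f (S x - S y)) \<le> L * (norm (x - y))^2" by (simp add: power2_eq_square algebra_simps)
    have pos: "0 < (norm (x - y))^2" using u by simp
    have "cmod z = cmod (f (S x - S y)) / (norm (x - y))^2" unfolding e(1) by (simp add: norm_divide norm_power)
    then show ?thesis using a pos by (simp add: divide_le_eq)
  qed
  have scal: "WC J (\<lambda>x. cscale J \<alpha> (S x)) = (\<lambda>z. \<alpha> * z) ` W" for \<alpha>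
  proof -
    have fl: "f (cscale J \<alpha> (S x) - cscale J \<alpha> (S y)) = \<alpha> * f (S x - S y)" if "f \<in> DC J (x - y)" for f x y
    proof -
      have "cdual J f" using that unfolding DC_def by blast
      then show ?thesis unfolding cs_lin(2)[OF J, symmetric] by (rule cdual_cs)
    qed
    show ?thesis
    proof (rule set_eqI, rule iffI)
      fix s assume "s \<in> WC J (\<lambda>x. cscale J \<alpha> (S x))"
      then obtain x y f where e: "s = f (cscale J \<alpha> (S x) - cscale J \<alpha> (S y)) / complex_of_real ((norm (x - y))^2)" "x \<noteq> y" "f \<in> DC J (x - y)"
        unfolding WC_def by blast
      have "f (S x - S y) / complex_of_real ((norm (x - y))^2) \<in> W" unfolding W_def WC_def using e by blast
      moreover have "s = \<alpha> * (f (S x - S y) / complex_of_real ((norm (x - y))^2))" using e fl[OF e(3)] by simp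
      ultimately show "s \<in> (\<lambda>z. \<alpha> * z) ` W" by blast
    next
      fix s assume "s \<in> (\<lambda>z. \<alpha> * z) ` W"
      then obtain x y f where e: "s = \<alpha> * (f (S x - S y) / complex_of_real ((norm (x - y))^2))" "x \<noteq> y" "f \<in> DC J (x - y)"
        unfolding W_def WC_def by blast
      have "s = f (cscale J \<alpha> (S x) - cscale J \<alpha> (S y)) / complex_of_real ((norm (x - y))^2)" using e fl[OF e(3)] by simp
      then show "s \<in> WC J (\<lambda>x. cscale J \<alpha> (S x))" unfolding WC_def using e by blast
    qed
  qed
  have lipa: "(cmod \<alpha> * L)-lipschitz_on UNIV (\<lambda>x. cscale J \<alpha> (S x))" for \<alpha>
  proof (rule lipschitz_onI)
    fix x y
    have "dist (cscale J \<alpha> (S x)) (cscale J \<alpha> (S y)) = cmod \<alpha> * norm (S x - S y)"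
      unfolding dist_norm cs_lin(2)[OF J, symmetric] cs_lin(4)[OF J] ..
    also have "\<dots> \<le> cmod \<alpha> * (L * dist x y)"
      using SL[of x y] unfolding dist_norm by (intro mult_left_mono) auto
    finally show "dist (cscale J \<alpha> (S x)) (cscale J \<alpha> (S y)) \<le> cmod \<alpha> * L * dist x y" by (simp add: mult.assoc)
    show "0 \<le> cmod \<alpha> * L" using L0 by simp
  qed
  define g where "g \<alpha> = Sup (Re ` (\<lambda>z. \<alpha> * z) ` W)" for \<alpha> :: complex
  have gl: "((\<lambda>t. (Lip_norm (\<lambda>x. x + t *\<^sub>R cscale J \<alpha> (S x)) - 1) / t) \<longlongrightarrow> g \<alpha>) (at_right 0)" for \<alpha>
    using lim[OF lipa[of \<alpha>]] unfolding scal g_def .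
  define s where "s = Sup (cmod ` W)"
  have cbdd: "bdd_above (cmod ` W)" using Wbd by (auto intro: bdd_aboveI[of _ L])
  have cs_up: "cmod z \<le> s" if "z \<in> W" for z unfolding s_def using that cbdd by (intro cSup_upper) auto
  have s0: "0 \<le> s" using Wne cs_up norm_ge_zero order_trans by blast
  have gbdd: "bdd_above (Re ` (\<lambda>z. \<alpha> * z) ` W)" for \<alpha>
  proof (rule bdd_aboveI[of _ "cmod \<alpha> * L"])
    fix r assume "r \<in> Re ` (\<lambda>z. \<alpha> * z) ` W"
    then obtain z where z: "z \<in> W" "r = Re (\<alpha> * z)" by blast
    have "r \<le> cmod (\<alpha> * z)" unfolding z(2) by (rule complex_Re_le_cmod)
    also have "\<dots> = cmod \<alpha> * cmod z" by (simp add: norm_mult)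
    also have "\<dots> \<le> cmod \<alpha> * L" using Wbd[OF z(1)] by (intro mult_left_mono) auto
    finally show "r \<le> cmod \<alpha> * L" .
  qed
  have g_up: "Re (\<alpha> * z) \<le> g \<alpha>" if "z \<in> W" for z \<alpha>
  proof -
    have "Re (\<alpha> * z) \<in> Re ` (\<lambda>z. \<alpha> * z) ` W" using that by blast
    then show ?thesis unfolding g_def using gbdd[of \<alpha>] by (rule cSup_upper)
  qed
  have g_le: "g \<alpha> \<le> s" if "cmod \<alpha> = 1" for \<alpha>
    unfolding g_def
  proof (rule cSup_least)
    show "Re ` (\<lambda>z. \<alpha> * z) ` W \<noteq> {}" using Wne by blast
  next
    fix r assume "r \<in> Re ` (\<lambda>z. \<alpha> * z) ` W"
    then obtain z where z: "z \<in> W" "r = Re (\<alpha> * z)" by blast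
    have "r \<le> cmod (\<alpha> * z)" unfolding z(2) by (rule complex_Re_le_cmod)
    also have "\<dots> = cmod z" using that by (simp add: norm_mult)
    finally show "r \<le> s" using cs_up[OF z(1)] by simp
  qed
  have g_lip1: "g \<alpha> \<le> g \<beta> + s * cmod (\<alpha> - \<beta>)" for \<alpha> \<beta>
    unfolding g_def[of \<alpha>]
  proof (rule cSup_least)
    show "Re ` (\<lambda>z. \<alpha> * z) ` W \<noteq> {}" using Wne by blast
  next
    fix r assume "r \<in> Re ` (\<lambda>z. \<alpha> * z) ` W"
    then obtain z where z: "z \<in> W" "r = Re (\<alpha> * z)" by blast
    have "r = Re (\<beta> * z) + Re ((\<alpha> - \<beta>) * z)" unfolding z(2) by (simp add: algebra_simps)
    also have "Re ((\<alpha> - \<beta>) * z) \<le> cmod ((\<alpha> - \<beta>) * z)" by (rule complex_Re_le_cmod)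
    also have "\<dots> = cmod (\<alpha> - \<beta>) * cmod z" by (simp add: norm_mult)
    also have "\<dots> \<le> cmod (\<alpha> - \<beta>) * s" using cs_up[OF z(1)] by (intro mult_left_mono) auto
    finally show "r \<le> g \<beta> + s * cmod (\<alpha> - \<beta>)" using g_up[OF z(1), of \<beta>] by (simp add: mult.commute)
  qed
  have "s-lipschitz_on UNIV g"
  proof (rule lipschitz_onI)
    fix \<alpha> \<beta> :: complex
    have "g \<alpha> - g \<beta> \<le> s * cmod (\<alpha> - \<beta>)" using g_lip1[of \<alpha> \<beta>] by simp
    moreover have "g \<beta> - g \<alpha> \<le> s * cmod (\<alpha> - \<beta>)" using g_lip1[of \<beta> \<alpha>] by (simp add: norm_minus_commute)
    ultimately show "dist (g \<alpha>) (g \<beta>) \<le> s * dist \<alpha> \<beta>" by (simp add: dist_real_def dist_norm abs_le_iff)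
    show "0 \<le> s" by (rule s0)
  qed
  then have "continuous_on (sphere 0 1) g"
    using lipschitz_on_continuous_on continuous_on_subset by blast
  moreover have "(1::complex) \<in> sphere 0 1" by simp
  ultimately obtain \<alpha>0 where a0: "\<alpha>0 \<in> sphere (0::complex) 1" and amax: "\<And>\<beta>. \<beta> \<in> sphere 0 1 \<Longrightarrow> g \<beta> \<le> g \<alpha>0"
    using continuous_attains_sup[of "sphere (0::complex) 1" g] by auto
  have "s \<le> g \<alpha>0" unfolding s_def
  proof (rule cSup_least)
    show "cmod ` W \<noteq> {}" using Wne by blast
  next
    fix r assume "r \<in> cmod ` W"
    then obtain z where z: "z \<in> W" "r = cmod z" by blast
    show "r \<le> g \<alpha>0"
    proof (cases "z = 0")
      case True
      have "Re (1 * z) \<le> g 1" by (rule g_up[OF z(1)])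
      also have "\<dots> \<le> g \<alpha>0" by (rule amax) simp
      finally show ?thesis using True z(2) by simp
    next
      case False
      define \<beta> where "\<beta> = cnj z / of_real (cmod z)"
      have b1: "cmod \<beta> = 1" unfolding \<beta>_def using False by (simp add: norm_divide)
      have "\<beta> * z = of_real ((cmod z)^2) / of_real (cmod z)"
        unfolding \<beta>_def complex_norm_square by (simp add: mult.commute)
      also have "\<dots> = of_real (cmod z)" using False by (simp add: power2_eq_square)
      finally have bz: "\<beta> * z = of_real (cmod z)" .
      have "r = Re (\<beta> * z)" unfolding bz z(2) by simp
      also have "\<dots> \<le> g \<beta>" by (rule g_up[OF z(1)])
      also have "\<dots> \<le> g \<alpha>0" by (rule amax) (simp add: b1)
      finally show ?thesis .
    qed
  qed
  moreover have "cmod \<alpha>0 = 1" using a0 by simp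
  ultimately have ex: "\<exists>\<alpha>. cmod \<alpha> = 1 \<and> g \<alpha> = s" using g_le[of \<alpha>0] by (intro exI[of _ \<alpha>0]) simp
  have om: "omegaC J S = s" unfolding omegaC_def s_def W_def ..
  have "\<exists>g. (\<forall>\<alpha>::complex. cmod \<alpha> = 1 \<longrightarrow>
              ((\<lambda>t. (Lip_norm (\<lambda>x. x + t *\<^sub>R cscale J \<alpha> (S x)) - 1) / t) \<longlongrightarrow> g \<alpha>) (at_right 0)) \<and>
           (\<exists>\<alpha>. cmod \<alpha> = 1 \<and> g \<alpha> = omegaC J S) \<and>
           (\<forall>\<alpha>. cmod \<alpha> = 1 \<longrightarrow> g \<alpha> \<le> omegaC J S)"
    unfolding om using gl ex g_le by blast
  then show ?thesis using lim[OF L] by blast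
qed


theorem theorem2p1:
  fixes T :: "'a::banach \<Rightarrow> 'a"
    and J :: "'b::banach \<Rightarrow> 'b" and S :: "'b \<Rightarrow> 'b"
  shows
   "(Lip0 T \<and> (\<exists>x::'a. x \<noteq> 0) \<longrightarrow>
      ((\<lambda>t. (Lip_norm (\<lambda>x. x + t *\<^sub>R T x) - 1) / t) \<longlongrightarrow> Sup (WR T)) (at_right 0) \<and>
      (\<exists>g. (\<forall>\<alpha>::real. \<bar>\<alpha>\<bar> = 1 \<longrightarrow>
              ((\<lambda>t. (Lip_norm (\<lambda>x. x + t *\<^sub>R (\<alpha> *\<^sub>R T x)) - 1) / t) \<longlongrightarrow> g \<alpha>) (at_right 0)) \<and>
           (\<exists>\<alpha>. \<bar>\<alpha>\<bar> = 1 \<and> g \<alpha> = omegaR T) \<and>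
           (\<forall>\<alpha>. \<bar>\<alpha>\<bar> = 1 \<longrightarrow> g \<alpha> \<le> omegaR T)))
    \<and>
    (complex_structure J \<and> Lip0 S \<and> (\<exists>x::'b. x \<noteq> 0) \<longrightarrow>
      ((\<lambda>t. (Lip_norm (\<lambda>x. x + t *\<^sub>R S x) - 1) / t) \<longlongrightarrow> Sup (Re ` WC J S)) (at_right 0) \<and>
      (\<exists>g. (\<forall>\<alpha>::complex. cmod \<alpha> = 1 \<longrightarrow>
              ((\<lambda>t. (Lip_norm (\<lambda>x. x + t *\<^sub>R cscale J \<alpha> (S x)) - 1) / t) \<longlongrightarrow> g \<alpha>) (at_right 0)) \<and>
           (\<exists>\<alpha>. cmod \<alpha> = 1 \<and> g \<alpha> = omegaC J S) \<and>
           (\<forall>\<alpha>. cmod \<alpha> = 1 \<longrightarrow> g \<alpha> \<le> omegaC J S)))"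
  proof (intro conjI impI)
  assume "Lip0 T \<and> (\<exists>x::'a. x \<noteq> 0)"
  then show "((\<lambda>t. (Lip_norm (\<lambda>x. x + t *\<^sub>R T x) - 1) / t) \<longlongrightarrow> Sup (WR T)) (at_right 0)"
    using real_part by blast
next
  assume "Lip0 T \<and> (\<exists>x::'a. x \<noteq> 0)"
  then show "\<exists>g. (\<forall>\<alpha>::real. \<bar>\<alpha>\<bar> = 1 \<longrightarrow>
              ((\<lambda>t. (Lip_norm (\<lambda>x. x + t *\<^sub>R (\<alpha> *\<^sub>R T x)) - 1) / t) \<longlongrightarrow> g \<alpha>) (at_right 0)) \<and>
           (\<exists>\<alpha>. \<bar>\<alpha>\<bar> = 1 \<and> g \<alpha> = omegaR T) \<and>
           (\<forall>\<alpha>. \<bar>\<alpha>\<bar> = 1 \<longrightarrow> g \<alpha> \<le> omegaR T)"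
    using real_part by blast
next
  assume "complex_structure J \<and> Lip0 S \<and> (\<exists>x::'b. x \<noteq> 0)"
  then show "((\<lambda>t. (Lip_norm (\<lambda>x. x + t *\<^sub>R S x) - 1) / t) \<longlongrightarrow> Sup (Re ` WC J S)) (at_right 0)"
    using complex_part by blast
next
  assume "complex_structure J \<and> Lip0 S \<and> (\<exists>x::'b. x \<noteq> 0)"
  then show "\<exists>g. (\<forall>\<alpha>::complex. cmod \<alpha> = 1 \<longrightarrow>
              ((\<lambda>t. (Lip_norm (\<lambda>x. x + t *\<^sub>R cscale J \<alpha> (S x)) - 1) / t) \<longlongrightarrow> g \<alpha>) (at_right 0)) \<and>
           (\<exists>\<alpha>. cmod \<alpha> = 1 \<and> g \<alpha> = omegaC J S) \<and>
           (\<forall>\<alpha>. cmod \<alpha> = 1 \<longrightarrow> g \<alpha> \<le> omegaC J S)"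
    using complex_part by blast
qed

end
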